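(* Let $X_\Sigma$ be a projective toric variety. For each primitive collection $C$ of $\Sigma$ there is a one-parameter subgroup $\lambda(C)\in\Gamma(G)$ such that for every point $x\in V(x_\rho:\rho\in C)\subset\mathbf C^{\Sigma(1)}$ and every ample divisor $D$ on $X_\Sigma$, the limit $\lim_{t\to0}\lambda(C)(t)\cdot x$ exists and $\langle\chi_D,\lambda(C)\rangle<0$ (i.e. $\lambda(C)$ fails the Hilbert–Mumford criterion for $x$ with respect to $\chi_D$). Moreover, if $\Sigma$ is simplicial, $-\lambda(C)$ is a positive integer multiple of the primitive relation of $C$.
   Context: $\Sigma$ is a complete fan in $N_{\mathbf R}$ ($N$ a lattice) with rays $\Sigma(1)$, primitive ray generators $u_\rho$, torus-invariant divisors $D_\rho$. A primitive collection is a subset $C\subset\Sigma(1)$ not contained in $\sigma(1)$ for any cone $\sigma\in\Sigma$, every proper subset of which is contained in some $\sigma(1)$. $G=\mathrm{Hom}_{\mathbf Z}(\mathrm{Cl}(X_\Sigma),\mathbf C^\times)\subset(\mathbf C^\times)^{\Sigma(1)}$ acts coordinatewise on $\mathbf C^{\Sigma(1)}=\mathrm{Spec}\,\mathbf C[x_\rho:\rho\in\Sigma(1)]$; its one-parameter subgroups are $\Gamma(G)=\{b\in\mathbf Z^{\Sigma(1)}:\sum_\rho b_\rho u_\rho=0\}$ acting by $b(t)\cdot x=(t^{b_\rho}x_\rho)_\rho$, and for a divisor $D=\sum_\rho a_\rho D_\rho$ with associated character $\chi_D$ of $G$, $\langle\chi_D,b\rangle=\sum_\rho a_\rho b_\rho$.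 Primitive relation (for $\Sigma$ simplicial): $u=\sum_{\rho\in C}u_\rho$ lies in the relative interior of a unique cone $\sigma\in\Sigma$, and $u=\sum_{\rho\in\sigma(1)}q_\rho u_\rho$ with unique $q_\rho\in\mathbf Q_{\ge0}$; the primitive relation of $C$ is $r\in\mathbf Q^{\Sigma(1)}$ with $r_\rho=1$ for $\rho\in C\setminus\sigma(1)$, $r_\rho=1-q_\rho$ for $\rho\in C\cap\sigma(1)$, $r_\rho=-q_\rho$ for $\rho\in\sigma(1)\setminus C$, and $r_\rho=0$ otherwise. *)

theory Defs
  imports "HOL-Analysis.Analysis"
begin

text \<open>Lattice N = Z^n, with n given by a finite index type 'n; rays of the fan are indexed
  by a finite type 'r (= Sigma(1)); u :: 'r => int^'n gives the primitive ray generators.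
  A cone of the fan is recorded by its set of rays sigma(1) (a subset of 'r);
  the fan itself is the set F of these ray sets.\<close>

definition ipair :: "int ^ 'n \<Rightarrow> int ^ 'n \<Rightarrow> int" where
  "ipair m v = (\<Sum>i\<in>UNIV. m $ i * v $ i)"

definition realv :: "int ^ 'n \<Rightarrow> real ^ 'n" where
  "realv v = (\<chi> i. real_of_int (v $ i))"

definition cone_gen :: "('r \<Rightarrow> int ^ 'n) \<Rightarrow> 'r set \<Rightarrow> (real ^ 'n) set" where
  "cone_gen u S = {x. \<exists>c. (\<forall>\<rho>\<in>S. c \<rho> \<ge> 0) \<and> x = (\<Sum>\<rho>\<in>S. c \<rho> *\<^sub>R realv (u \<rho>))}"

definition primitive_vec :: "int ^ 'n \<Rightarrow> bool" where
  "primitive_vec v \<longleftrightarrow> v \<noteq> 0 \<and> (\<forall>(k::int) w. v = k *s w \<longrightarrow> k = 1 \<or> k = -1)"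

definition is_fan :: "('r::finite \<Rightarrow> int ^ 'n) \<Rightarrow> 'r set set \<Rightarrow> bool" where
  "is_fan u F \<longleftrightarrow>
     (\<forall>\<rho>. primitive_vec (u \<rho>)) \<and>
     (\<forall>\<rho>. {\<rho>} \<in> F) \<and>
     (\<forall>S\<in>F. cone_gen u S \<inter> uminus ` cone_gen u S = {0}) \<and>
     (\<forall>S\<in>F. \<forall>T\<in>F. cone_gen u T \<subseteq> cone_gen u S \<longrightarrow> T \<subseteq> S) \<and>
     (\<forall>S\<in>F. \<forall>K. K face_of cone_gen u S \<and> K \<noteq> {} \<longrightarrow> (\<exists>T\<in>F. T \<subseteq> S \<and> K = cone_gen u T)) \<and>
     (\<forall>S\<in>F. \<forall>T\<in>F. (cone_gen u S \<inter> cone_gen u T) face_of cone_gen u S \<and>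
                     (cone_gen u S \<inter> cone_gen u T) face_of cone_gen u T)"

definition complete_fan :: "('r::finite \<Rightarrow> int ^ 'n) \<Rightarrow> 'r set set \<Rightarrow> bool" where
  "complete_fan u F \<longleftrightarrow> is_fan u F \<and> (\<Union>S\<in>F. cone_gen u S) = UNIV"

definition simplicial_fan :: "('r::finite \<Rightarrow> int ^ 'n) \<Rightarrow> 'r set set \<Rightarrow> bool" where
  "simplicial_fan u F \<longleftrightarrow> (\<forall>S\<in>F. inj_on (\<lambda>\<rho>. realv (u \<rho>)) S \<and>
                                   independent ((\<lambda>\<rho>. realv (u \<rho>)) ` S))"

text \<open>Ampleness of the torus-invariant divisor D = sum a_rho D_rho on the complete toric
  variety X_Sigma (Cox-Little-Schenck, Thm 6.1.14 / Lemma 6.1.13): D is Cartier, i.e. for each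
  maximal cone sigma there is m_sigma in M with <m_sigma,u_rho> = -a_rho for rho in sigma(1),
  and its support function is strictly convex: <m_sigma,u_rho> > -a_rho for rho not in sigma(1).\<close>
definition ample :: "('r::finite \<Rightarrow> int ^ 'n) \<Rightarrow> 'r set set \<Rightarrow> ('r \<Rightarrow> int) \<Rightarrow> bool" where
  "ample u F a \<longleftrightarrow>
     (\<forall>S\<in>F. interior (cone_gen u S) \<noteq> {} \<longrightarrow>
        (\<exists>m::int ^ 'n. (\<forall>\<rho>\<in>S. ipair m (u \<rho>) = - a \<rho>) \<and>
                       (\<forall>\<rho>. \<rho> \<notin> S \<longrightarrow> ipair m (u \<rho>) > - a \<rho>)))"

definition projective_fan :: "('r::finite \<Rightarrow> int ^ 'n) \<Rightarrow> 'r set set \<Rightarrow> bool" where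
  "projective_fan u F \<longleftrightarrow> complete_fan u F \<and> (\<exists>a. ample u F a)"

definition primitive_collection :: "'r set set \<Rightarrow> 'r set \<Rightarrow> bool" where
  "primitive_collection F C \<longleftrightarrow> (\<forall>S\<in>F. \<not> C \<subseteq> S) \<and> (\<forall>C'. C' \<subset> C \<longrightarrow> (\<exists>S\<in>F. C' \<subseteq> S))"

definition one_param :: "('r::finite \<Rightarrow> int ^ 'n) \<Rightarrow> ('r \<Rightarrow> int) \<Rightarrow> bool" where
  "one_param u b \<longleftrightarrow> (\<Sum>\<rho>\<in>UNIV. b \<rho> *s u \<rho>) = 0"

definition ops_act :: "('r \<Rightarrow> int) \<Rightarrow> complex \<Rightarrow> ('r \<Rightarrow> complex) \<Rightarrow> ('r \<Rightarrow> complex)" where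
  "ops_act b t x = (\<lambda>\<rho>. t powi (b \<rho>) * x \<rho>)"

text \<open>Pairing <chi_D, b> for D = sum a_rho D_rho.\<close>
definition char_pair :: "('r::finite \<Rightarrow> int) \<Rightarrow> ('r \<Rightarrow> int) \<Rightarrow> int" where
  "char_pair a b = (\<Sum>\<rho>\<in>UNIV. a \<rho> * b \<rho>)"

text \<open>Primitive relation of C (simplicial case), as in the paper; rational values are
  represented as reals.\<close>
definition prim_sigma :: "('r::finite \<Rightarrow> int ^ 'n) \<Rightarrow> 'r set set \<Rightarrow> 'r set \<Rightarrow> 'r set" where
  "prim_sigma u F C = (THE S. S \<in> F \<and>
       (\<Sum>\<rho>\<in>C. realv (u \<rho>)) \<in> rel_interior (cone_gen u S))"

definition prim_q :: "('r::finite \<Rightarrow> int ^ 'n) \<Rightarrow> 'r set set \<Rightarrow> 'r set \<Rightarrow> 'r \<Rightarrow> real" where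
  "prim_q u F C = (THE q. (\<forall>\<rho>. \<rho> \<notin> prim_sigma u F C \<longrightarrow> q \<rho> = 0) \<and>
       (\<forall>\<rho>\<in>prim_sigma u F C. q \<rho> \<ge> 0) \<and>
       (\<Sum>\<rho>\<in>C. realv (u \<rho>)) = (\<Sum>\<rho>\<in>prim_sigma u F C. q \<rho> *\<^sub>R realv (u \<rho>)))"

definition prim_relation :: "('r::finite \<Rightarrow> int ^ 'n) \<Rightarrow> 'r set set \<Rightarrow> 'r set \<Rightarrow> 'r \<Rightarrow> real" where
  "prim_relation u F C = (\<lambda>\<rho>. (if \<rho> \<in> C then 1 else 0) - prim_q u F C \<rho>)"

end

theory Submission
  imports Defs
begin


lemma realv_add: "realv (x + y) = realv x + realv y"
  by (simp add: realv_def vec_eq_iff)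

lemma realv_zero[simp]: "realv 0 = 0"
  by (simp add: realv_def vec_eq_iff)

lemma realv_smult: "realv (k *s x) = real_of_int k *\<^sub>R realv x"
  by (simp add: realv_def vec_eq_iff)

lemma realv_sum: "realv (\<Sum>i\<in>S. g i) = (\<Sum>i\<in>S. realv (g i))"
  by (induction S rule: infinite_finite_induct) (auto simp: realv_add)

lemma realv_inj: "realv x = realv y \<Longrightarrow> x = y"
  by (simp add: realv_def vec_eq_iff)

lemma realv_nth_rat: "realv x $ i \<in> \<rat>"
  by (simp add: realv_def)

lemma inner_realv: "realv m \<bullet> realv w = real_of_int (ipair m w)"
  by (simp add: realv_def inner_vec_def ipair_def)

lemma cone_gen_eq:
  fixes u :: "'r::finite \<Rightarrow> int ^ 'n"
  shows "cone_gen u S = convex_cone hull ((\<lambda>\<rho>. realv (u \<rho>)) ` S)"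
proof
  have fin: "finite S" by simp
  show "cone_gen u S \<subseteq> convex_cone hull ((\<lambda>\<rho>. realv (u \<rho>)) ` S)"
  proof
    fix x assume "x \<in> cone_gen u S"
    then obtain c where c: "\<forall>\<rho>\<in>S. c \<rho> \<ge> 0" "x = (\<Sum>\<rho>\<in>S. c \<rho> *\<^sub>R realv (u \<rho>))"
      by (auto simp: cone_gen_def)
    have "(\<Sum>\<rho>\<in>T. c \<rho> *\<^sub>R realv (u \<rho>)) \<in> convex_cone hull ((\<lambda>\<rho>. realv (u \<rho>)) ` S)"
      if "T \<subseteq> S" for T
      using that
    proof (induction T rule: infinite_finite_induct)
      case (infinite A) then show ?case by (simp add: convex_cone_hull_contains_0)
    next
      case empty then show ?case by (simp add: convex_cone_hull_contains_0)
    next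
      case (insert x F)
      then show ?case
        using c(1) by (simp add: convex_cone_hull_add convex_cone_hull_mul hull_inc)
    qed
    then show "x \<in> convex_cone hull ((\<lambda>\<rho>. realv (u \<rho>)) ` S)" using c by auto
  qed
next
  have cc: "convex_cone (cone_gen u S)"
    unfolding convex_cone_iff
  proof (intro conjI ballI allI impI)
    show "0 \<in> cone_gen u S" unfolding cone_gen_def
      by (rule CollectI, rule exI[of _ "\<lambda>_. 0"]) simp
  next
    fix x y assume "x \<in> cone_gen u S" "y \<in> cone_gen u S"
    then obtain c d where "\<forall>\<rho>\<in>S. c \<rho> \<ge> 0" "x = (\<Sum>\<rho>\<in>S. c \<rho> *\<^sub>R realv (u \<rho>))"
       "\<forall>\<rho>\<in>S. d \<rho> \<ge> 0" "y = (\<Sum>\<rho>\<in>S. d \<rho> *\<^sub>R realv (u \<rho>))"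
      by (auto simp: cone_gen_def)
    then show "x + y \<in> cone_gen u S" unfolding cone_gen_def
      by (intro CollectI exI[of _ "\<lambda>\<rho>. c \<rho> + d \<rho>"]) (auto simp: sum.distrib scaleR_add_left)
  next
    fix x and t :: real assume "x \<in> cone_gen u S" "0 \<le> t"
    then obtain c where "\<forall>\<rho>\<in>S. c \<rho> \<ge> 0" "x = (\<Sum>\<rho>\<in>S. c \<rho> *\<^sub>R realv (u \<rho>))"
      by (auto simp: cone_gen_def)
    then show "t *\<^sub>R x \<in> cone_gen u S" using \<open>0 \<le> t\<close> unfolding cone_gen_def
      by (intro CollectI exI[of _ "\<lambda>\<rho>. t * c \<rho>"]) (auto simp: scaleR_sum_right)
  qed
  have "(\<lambda>\<rho>. realv (u \<rho>)) ` S \<subseteq> cone_gen u S"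
  proof
    fix y assume "y \<in> (\<lambda>\<rho>. realv (u \<rho>)) ` S"
    then obtain r where r: "r \<in> S" "y = realv (u r)" by auto
    show "y \<in> cone_gen u S" unfolding cone_gen_def
      by (intro CollectI exI[of _ "\<lambda>\<rho>. if \<rho> = r then 1 else 0"]) (simp add: r if_distrib[of "\<lambda>t. t *\<^sub>R _"] sum.delta cong: if_cong)
  qed
  then show "convex_cone hull ((\<lambda>\<rho>. realv (u \<rho>)) ` S) \<subseteq> cone_gen u S"
    using cc by (simp add: hull_minimal)
qed

lemma closed_cone_gen: "closed (cone_gen (u::'r::finite \<Rightarrow> int ^ 'n) S)"
  by (simp add: cone_gen_eq closed_convex_cone_hull)

lemma convex_cone_gen: "convex (cone_gen (u::'r::finite \<Rightarrow> int ^ 'n) S)"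
  by (simp add: cone_gen_eq convex_convex_cone_hull)



lemma face_rel_int:
  fixes K :: "'a::euclidean_space set"
  assumes "convex K" "closed K" "x \<in> K"
  shows "\<exists>L. L face_of K \<and> x \<in> rel_interior L"
proof -
  have main: "\<And>L. nat (aff_dim L + 1) = n \<Longrightarrow> L face_of K \<Longrightarrow> x \<in> L \<Longrightarrow> \<exists>L'. L' face_of K \<and> x \<in> rel_interior L'" for n
  proof (induction n rule: less_induct)
    case (less n L)
    show ?case
    proof (cases "x \<in> rel_interior L")
      case True then show ?thesis using less.prems by blast
    next
      case False
      have cL: "convex L" using less.prems(2) face_of_imp_convex by blast
      have clL: "closed L" using less.prems(2) face_of_imp_closed assms by blast
      have "x \<in> closure L" using less.prems(3) closure_subset by blast
      then obtain a where a: "a \<noteq> 0" "\<And>y. y \<in> closure L \<Longrightarrow> a \<bullet> x \<le> a \<bullet> y"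
        "\<And>y. y \<in> rel_interior L \<Longrightarrow> a \<bullet> x < a \<bullet> y"
        using supporting_hyperplane_relative_frontier[OF cL _ False] by blast
      define L' where "L' = L \<inter> {y. a \<bullet> y = a \<bullet> x}"
      have f1: "L' face_of L" unfolding L'_def
        by (rule face_of_Int_supporting_hyperplane_ge[OF cL]) (use a(2) closure_subset in blast)
      have f2: "L' face_of K" using f1 less.prems(2) face_of_trans by blast
      have xL': "x \<in> L'" using less.prems(3) by (simp add: L'_def)
      have "rel_interior L \<noteq> {}" using cL less.prems(3) rel_interior_eq_empty by blast
      then obtain y where "y \<in> rel_interior L" by blast
      then have "a \<bullet> x < a \<bullet> y" using a(3) by blast
      then have "y \<notin> L'" by (simp add: L'_def)
      moreover have "y \<in> L" using \<open>y \<in> rel_interior L\<close> rel_interior_subset by blast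
      ultimately have "L' \<noteq> L" by blast
      then have "aff_dim L' < aff_dim L" using face_of_aff_dim_lt[OF cL f1] by blast
      moreover have "aff_dim L' \<ge> -1" by (simp add: aff_dim_geq)
      ultimately have "nat (aff_dim L' + 1) < n" using less.prems(1) by linarith
      then show ?thesis using less.IH f2 xL' by blast
    qed
  qed
  show ?thesis using main[OF refl face_of_refl[OF assms(1)] assms(3)] .
qed

lemma interior_Union_closed_empty:
  fixes A :: "'a::topological_space set set"
  assumes "finite A" "\<And>S. S \<in> A \<Longrightarrow> closed S \<and> interior S = {}"
  shows "interior (\<Union>A) = {}"
  using assms
proof (induction A rule: finite_induct)
  case empty then show ?case by simp
next
  case (insert x F)
  then show ?case by (simp add: interior_closed_Un_empty_interior)
qed

lemma complete_full_cover:
  fixes u :: "'r::finite \<Rightarrow> int ^ 'n"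
  assumes "(\<Union>S\<in>F. cone_gen u S) = UNIV"
  shows "\<exists>S\<in>F. interior (cone_gen u S) \<noteq> {} \<and> y \<in> cone_gen u S"
proof -
  have finF: "finite F" by (rule finite_subset[of _ "UNIV"]) auto
  define U where "U = (\<Union>S\<in>{S\<in>F. interior (cone_gen u S) \<noteq> {}}. cone_gen u S)"
  define A where "A = (\<Union>S\<in>{S\<in>F. interior (cone_gen u S) = {}}. cone_gen u S)"
  have cU: "closed U" unfolding U_def using finF by (intro closed_UN) (auto simp: closed_cone_gen)
  have iA: "interior A = {}" unfolding A_def
    by (rule interior_Union_closed_empty) (use finF in \<open>auto simp: closed_cone_gen\<close>)
  have "U \<union> A = UNIV"
  proof -
    have "z \<in> U \<union> A" for z
    proof -
      obtain S where "S \<in> F" "z \<in> cone_gen u S" using assms by (metis UNIV_I UN_E)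
      then show ?thesis unfolding U_def A_def by (cases "interior (cone_gen u S) = {}") auto
    qed
    then show ?thesis by blast
  qed
  then have "interior U = UNIV" using interior_closed_Un_empty_interior[OF cU iA] by simp
  then have "U = UNIV" using interior_subset by blast
  then show ?thesis unfolding U_def by blast
qed



lemma indep_coeffs_zero:
  fixes w :: "'r \<Rightarrow> 'a::real_vector"
  assumes "finite W" "inj_on w W" "independent (w ` W)" "(\<Sum>\<rho>\<in>W. e \<rho> *\<^sub>R w \<rho>) = 0"
  shows "\<forall>\<rho>\<in>W. e \<rho> = 0"
proof -
  define h where "h = (\<lambda>x. e (the_inv_into W w x))"
  have "(\<Sum>x\<in>w ` W. h x *\<^sub>R x) = (\<Sum>\<rho>\<in>W. h (w \<rho>) *\<^sub>R w \<rho>)"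
    by (rule sum.reindex[OF assms(2), unfolded comp_def])
  also have "\<dots> = (\<Sum>\<rho>\<in>W. e \<rho> *\<^sub>R w \<rho>)"
    by (rule sum.cong) (auto simp: h_def the_inv_into_f_f[OF assms(2)])
  finally have "(\<Sum>x\<in>w ` W. h x *\<^sub>R x) = 0" using assms(4) by simp
  then have "\<forall>x\<in>w ` W. h x = 0"
    using assms(3) real_vector.dependent_finite[of "w ` W"] assms(1) by blast
  then show ?thesis by (auto simp: h_def the_inv_into_f_f[OF assms(2)])
qed

lemma conic_cara:
  fixes f :: "'r \<Rightarrow> 'a::real_vector"
  assumes "finite S" "\<forall>\<rho>\<in>S. c \<rho> \<ge> 0" "v = (\<Sum>\<rho>\<in>S. c \<rho> *\<^sub>R f \<rho>)"
  shows "\<exists>W d. W \<subseteq> S \<and> inj_on f W \<and> independent (f ` W) \<and> (\<forall>\<rho>\<in>W. d \<rho> \<ge> 0) \<and> v = (\<Sum>\<rho>\<in>W. d \<rho> *\<^sub>R f \<rho>)"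
  using assms
proof (induction "card S" arbitrary: S c rule: less_induct)
  case (less S c)
  show ?case
  proof (cases "inj_on f S \<and> independent (f ` S)")
    case True then show ?thesis using less.prems by blast
  next
    case False
    have "\<exists>e. (\<Sum>\<rho>\<in>S. e \<rho> *\<^sub>R f \<rho>) = 0 \<and> (\<exists>\<rho>\<in>S. e \<rho> \<noteq> 0)"
    proof (cases "inj_on f S")
      case False
      then obtain r1 r2 where r: "r1 \<in> S" "r2 \<in> S" "r1 \<noteq> r2" "f r1 = f r2"
        unfolding inj_on_def by blast
      define e where "e = (\<lambda>\<rho>. if \<rho> = r1 then 1 else if \<rho> = r2 then -1 else (0::real))"
      have "\<And>\<rho>. e \<rho> *\<^sub>R f \<rho> = (if \<rho> = r1 then f r1 else 0) - (if \<rho> = r2 then f r2 else 0)"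
        using r by (auto simp: e_def)
      then have "(\<Sum>\<rho>\<in>S. e \<rho> *\<^sub>R f \<rho>) = 0"
        using r less.prems(1) by (simp add: sum_subtractf sum.delta)
      moreover have "e r1 \<noteq> 0" by (simp add: e_def)
      ultimately show ?thesis using r by blast
    next
      case True
      then have "dependent (f ` S)" using False by blast
      then obtain h where h: "\<exists>x\<in>f ` S. h x \<noteq> 0" "(\<Sum>x\<in>f ` S. h x *\<^sub>R x) = 0"
        using real_vector.dependent_finite[of "f ` S"] less.prems(1) by blast
      have "(\<Sum>\<rho>\<in>S. h (f \<rho>) *\<^sub>R f \<rho>) = 0"
        using h(2) sum.reindex[OF True, of "\<lambda>x. h x *\<^sub>R x"] by (simp add: comp_def)
      then show ?thesis using h(1) by (intro exI[of _ "\<lambda>\<rho>. h (f \<rho>)"]) auto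
    qed
    then obtain e0 where e0: "(\<Sum>\<rho>\<in>S. e0 \<rho> *\<^sub>R f \<rho>) = 0" "\<exists>\<rho>\<in>S. e0 \<rho> \<noteq> 0" by blast
    have "\<exists>e. (\<Sum>\<rho>\<in>S. e \<rho> *\<^sub>R f \<rho>) = 0 \<and> (\<exists>\<rho>\<in>S. e \<rho> > 0)"
    proof -
      obtain r0 where r0: "r0 \<in> S" "e0 r0 \<noteq> 0" using e0 by blast
      show ?thesis
      proof (cases "e0 r0 > 0")
        case True then show ?thesis using e0 r0 by blast
      next
        case False
        then have "- e0 r0 > 0" using r0 by simp
        moreover have "(\<Sum>\<rho>\<in>S. (- e0 \<rho>) *\<^sub>R f \<rho>) = 0"
          using e0(1) by (simp add: sum_negf)
        ultimately show ?thesis using r0 by (intro exI[of _ "\<lambda>\<rho>. - e0 \<rho>"]) auto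
      qed
    qed
    then obtain e where e: "(\<Sum>\<rho>\<in>S. e \<rho> *\<^sub>R f \<rho>) = 0" "\<exists>\<rho>\<in>S. e \<rho> > 0" by blast
    define P where "P = {\<rho>\<in>S. e \<rho> > 0}"
    have finP: "finite P" "P \<noteq> {}" using less.prems(1) e(2) by (auto simp: P_def)
    define t where "t = Min ((\<lambda>\<rho>. c \<rho> / e \<rho>) ` P)"
    have "t \<in> (\<lambda>\<rho>. c \<rho> / e \<rho>) ` P" unfolding t_def using finP by (intro Min_in) auto
    then obtain r0 where r0: "r0 \<in> P" "t = c r0 / e r0" by auto
    have tle: "t \<le> c \<rho> / e \<rho>" if "\<rho> \<in> P" for \<rho>
      unfolding t_def using finP that by (auto intro: Min_le)
    have t0: "t \<ge> 0" using r0 less.prems(2) by (auto simp: P_def)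
    define c' where "c' = (\<lambda>\<rho>. c \<rho> - t * e \<rho>)"
    have c'pos: "c' \<rho> \<ge> 0" if "\<rho> \<in> S" for \<rho>
    proof (cases "e \<rho> > 0")
      case True
      then have "t \<le> c \<rho> / e \<rho>" using tle that by (auto simp: P_def)
      then have "t * e \<rho> \<le> c \<rho>" using True by (simp add: pos_le_divide_eq)
      then show ?thesis by (simp add: c'_def)
    next
      case False
      then have "t * e \<rho> \<le> 0" using t0 by (simp add: mult_nonneg_nonpos)
      moreover have "c \<rho> \<ge> 0" using less.prems(2) that by blast
      ultimately show ?thesis by (simp add: c'_def)
    qed
    have c'r0: "c' r0 = 0" using r0 by (auto simp: c'_def P_def)
    have "(\<Sum>\<rho>\<in>S. c' \<rho> *\<^sub>R f \<rho>) = (\<Sum>\<rho>\<in>S. c \<rho> *\<^sub>R f \<rho>) - t *\<^sub>R (\<Sum>\<rho>\<in>S. e \<rho> *\<^sub>R f \<rho>)"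
      by (simp add: c'_def scaleR_diff_left sum_subtractf scaleR_sum_right)
    then have vS: "v = (\<Sum>\<rho>\<in>S. c' \<rho> *\<^sub>R f \<rho>)" using e(1) less.prems(3) by simp
    have r0S: "r0 \<in> S" using r0 by (simp add: P_def)
    have vS': "v = (\<Sum>\<rho>\<in>S - {r0}. c' \<rho> *\<^sub>R f \<rho>)"
      using vS sum.remove[OF less.prems(1) r0S, of "\<lambda>\<rho>. c' \<rho> *\<^sub>R f \<rho>"] c'r0 by simp
    have cardlt: "card (S - {r0}) < card S" using less.prems(1) r0S by (rule card_Diff1_less)
    have ih: "\<exists>W d. W \<subseteq> S - {r0} \<and> inj_on f W \<and> independent (f ` W) \<and> (\<forall>\<rho>\<in>W. d \<rho> \<ge> 0) \<and> v = (\<Sum>\<rho>\<in>W. d \<rho> *\<^sub>R f \<rho>)"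
    proof (rule less.hyps[OF cardlt])
      show "finite (S - {r0})" using less.prems(1) by simp
      show "\<forall>\<rho>\<in>S - {r0}. 0 \<le> c' \<rho>" using c'pos by simp
      show "v = (\<Sum>\<rho>\<in>S - {r0}. c' \<rho> *\<^sub>R f \<rho>)" by (rule vS')
    qed
    then obtain W d where "W \<subseteq> S - {r0}" "inj_on f W" "independent (f ` W)"
      "\<forall>\<rho>\<in>W. d \<rho> \<ge> 0" "v = (\<Sum>\<rho>\<in>W. d \<rho> *\<^sub>R f \<rho>)"
      by blast
    then show ?thesis by blast
  qed
qed

lemma rat_coeffs:
  fixes w :: "'r \<Rightarrow> real ^ 'n"
  assumes "finite W" "inj_on w W" "independent (w ` W)" "\<forall>\<rho>\<in>W. \<forall>i. w \<rho> $ i \<in> \<rat>"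
    "\<forall>i. v $ i \<in> \<rat>" "v = (\<Sum>\<rho>\<in>W. c \<rho> *\<^sub>R w \<rho>)"
  shows "\<forall>\<rho>\<in>W. c \<rho> \<in> \<rat>"
proof -
  interpret vp: vector_space_pair "\<lambda>(q::rat) (x::real). of_rat q * x" "(*) :: rat \<Rightarrow> rat \<Rightarrow> rat"
    by unfold_locales (auto simp: algebra_simps of_rat_add of_rat_mult)
  have "vp.vs1.independent {1::real}" by simp
  then obtain g where g: "Vector_Spaces.linear (\<lambda>(q::rat) (x::real). of_rat q * x) (*) g" "g 1 = 1"
    using vp.linear_independent_extend[of "{1}" "\<lambda>_. 1"] by auto
  have gsc: "\<And>q x. g (of_rat q * x) = q * g x"
    using vp.linear_scale[OF g(1)] by simp
  have gsum: "g (\<Sum>\<rho>\<in>A. h \<rho>) = (\<Sum>\<rho>\<in>A. g (h \<rho>))" for A h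
    by (rule vp.linear_sum[OF g(1)])
  have grat: "of_rat (g r) = r" if rr: "r \<in> \<rat>" for r
  proof -
    obtain q where "r = of_rat q" using rr by (rule Rats_cases)
    then show ?thesis using gsc[of q 1] g(2) by simp
  qed
  define d where "d = (\<lambda>\<rho>. of_rat (g (c \<rho>)) :: real)"
  have "v $ i = (\<Sum>\<rho>\<in>W. d \<rho> * w \<rho> $ i)" for i
  proof -
    have vi: "v $ i = (\<Sum>\<rho>\<in>W. c \<rho> * w \<rho> $ i)" using assms(6) by simp
    have "g (v $ i) = (\<Sum>\<rho>\<in>W. g (c \<rho> * w \<rho> $ i))" using vi gsum by simp
    also have "\<dots> = (\<Sum>\<rho>\<in>W. g (w \<rho> $ i) * g (c \<rho>))"
    proof (rule sum.cong[OF refl])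
      fix \<rho> assume "\<rho> \<in> W"
      then have "w \<rho> $ i \<in> \<rat>" using assms(4) by blast
      then obtain q where q: "w \<rho> $ i = of_rat q" by (rule Rats_cases)
      then have "g (w \<rho> $ i) = q" using grat \<open>w \<rho> $ i \<in> \<rat>\<close> by (metis of_rat_eq_iff)
      then show "g (c \<rho> * w \<rho> $ i) = g (w \<rho> $ i) * g (c \<rho>)"
        using gsc[of q "c \<rho>"] q by (simp add: mult.commute)
    qed
    finally have "of_rat (g (v $ i)) = (\<Sum>\<rho>\<in>W. of_rat (g (w \<rho> $ i)) * of_rat (g (c \<rho>)) :: real)"
      by (simp add: of_rat_sum of_rat_mult)
    also have "\<dots> = (\<Sum>\<rho>\<in>W. d \<rho> * w \<rho> $ i)"
      by (rule sum.cong[OF refl]) (use assms(4) grat in \<open>auto simp: d_def\<close>)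
    finally show ?thesis using grat assms(5) by simp
  qed
  then have "v = (\<Sum>\<rho>\<in>W. d \<rho> *\<^sub>R w \<rho>)" unfolding vec_eq_iff by simp
  then have "(\<Sum>\<rho>\<in>W. (c \<rho> - d \<rho>) *\<^sub>R w \<rho>) = 0"
    using assms(6) by (simp add: scaleR_diff_left sum_subtractf)
  then have "\<forall>\<rho>\<in>W. c \<rho> - d \<rho> = 0" by (rule indep_coeffs_zero[OF assms(1,2,3)])
  then show ?thesis unfolding d_def by (metis Rats_of_rat eq_iff_diff_eq_0)
qed

lemma common_denom:
  assumes "finite W" "\<forall>\<rho>\<in>W. c \<rho> \<in> \<rat>"
  shows "\<exists>k::nat. k > 0 \<and> (\<forall>\<rho>\<in>W. real k * c \<rho> \<in> \<int>)"
  using assms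
proof (induction W rule: finite_induct)
  case empty then show ?case by (intro exI[of _ "1::nat"]) simp
next
  case (insert x F)
  then obtain k where k: "k > 0" "\<forall>\<rho>\<in>F. real k * c \<rho> \<in> \<int>" by auto
  obtain a b where ab: "b > 0" "c x = of_int a / of_int b" using insert.prems Rats_cases' by blast
  define k' where "k' = k * nat b"
  have "k' > 0" using k ab by (simp add: k'_def)
  moreover have "real k' * c \<rho> \<in> \<int>" if "\<rho> \<in> insert x F" for \<rho>
  proof (cases "\<rho> = x")
    case True
    have "real k' * c \<rho> = of_int (int k * a)" using ab True by (simp add: k'_def)
    then show ?thesis by simp
  next
    case False
    then have "real k * c \<rho> \<in> \<int>" using k that by auto
    then have i1: "of_int b * (real k * c \<rho>) \<in> \<int>" by (simp add: Ints_mult)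
    have "real k' = real_of_int b * real k" using ab(1) by (simp add: k'_def)
    then have eq: "real k' * c \<rho> = of_int b * (real k * c \<rho>)" by (simp add: mult.assoc)
    show ?thesis by (simp only: eq i1)
  qed
  ultimately show ?case by blast
qed



lemma core:
  fixes u :: "'r::finite \<Rightarrow> int ^ 'n" and C W \<tau> :: "'r set" and c :: "'r \<Rightarrow> real"
  assumes tauF: "\<tau> \<in> F" and tauint: "interior (cone_gen u \<tau>) \<noteq> {}" and Wt: "W \<subseteq> \<tau>"
    and Cnt: "\<not> C \<subseteq> \<tau>"
    and inj: "inj_on (\<lambda>\<rho>. realv (u \<rho>)) W" and ind: "independent ((\<lambda>\<rho>. realv (u \<rho>)) ` W)"
    and cpos: "\<forall>\<rho>\<in>W. c \<rho> \<ge> 0"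
    and veq: "(\<Sum>\<rho>\<in>C. realv (u \<rho>)) = (\<Sum>\<rho>\<in>W. c \<rho> *\<^sub>R realv (u \<rho>))"
  shows "\<exists>b k. k > (0::nat) \<and>
     (\<forall>\<rho>. real_of_int (b \<rho>) = - real k * ((if \<rho> \<in> C then 1 else 0) - (if \<rho> \<in> W then c \<rho> else 0))) \<and>
     one_param u b \<and>
     (\<forall>x :: 'r \<Rightarrow> complex. (\<forall>\<rho>\<in>C. x \<rho> = 0) \<longrightarrow>
         (\<exists>l. ((\<lambda>t. ops_act b t x) \<longlongrightarrow> l) (at (0::complex)))) \<and>
     (\<forall>a. ample u F a \<longrightarrow> char_pair a b < 0)"
proof -
  define f where "f = (\<lambda>\<rho>. realv (u \<rho>))"
  define v where "v = (\<Sum>\<rho>\<in>C. f \<rho>)"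
  have vr: "v = realv (\<Sum>\<rho>\<in>C. u \<rho>)" by (simp add: v_def f_def realv_sum)
  have veq': "v = (\<Sum>\<rho>\<in>W. c \<rho> *\<^sub>R f \<rho>)" using veq by (simp add: v_def f_def)
  have crat: "\<forall>\<rho>\<in>W. c \<rho> \<in> \<rat>"
  proof (rule rat_coeffs[of W f v c])
    show "finite W" by simp
    show "inj_on f W" using inj by (simp add: f_def)
    show "independent (f ` W)" using ind by (simp add: f_def)
    show "\<forall>\<rho>\<in>W. \<forall>i. f \<rho> $ i \<in> \<rat>" by (simp add: f_def realv_nth_rat)
    show "\<forall>i. v $ i \<in> \<rat>" by (simp add: vr realv_nth_rat)
    show "v = (\<Sum>\<rho>\<in>W. c \<rho> *\<^sub>R f \<rho>)" by (rule veq')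
  qed
  obtain k :: nat where k: "k > 0" "\<forall>\<rho>\<in>W. real k * c \<rho> \<in> \<int>"
    using common_denom[of W c] crat by auto
  define c' where "c' = (\<lambda>\<rho>. if \<rho> \<in> W then c \<rho> else 0)"
  have c'int: "real k * c' \<rho> \<in> \<int>" for \<rho> using k(2) by (simp add: c'_def)
  have c'pos: "c' \<rho> \<ge> 0" for \<rho> using cpos by (simp add: c'_def)
  define e where "e = (\<lambda>\<rho>. \<lfloor>real k * c' \<rho>\<rfloor>)"
  have e_eq: "real_of_int (e \<rho>) = real k * c' \<rho>" for \<rho>
  proof -
    obtain n where "real k * c' \<rho> = of_int n" using c'int[of \<rho>] Ints_cases by blast
    then show ?thesis by (simp add: e_def)
  qed
  define b where "b = (\<lambda>\<rho>. e \<rho> - (if \<rho> \<in> C then int k else 0))"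
  have beq: "real_of_int (b \<rho>) = - real k * ((if \<rho> \<in> C then 1 else 0) - c' \<rho>)" for \<rho>
    by (cases "\<rho> \<in> C") (simp_all add: b_def e_eq algebra_simps)
  have bnn: "b \<rho> \<ge> 0" if "\<rho> \<notin> C" for \<rho>
  proof -
    have "real_of_int (b \<rho>) \<ge> 0" using beq[of \<rho>] that c'pos[of \<rho>] by simp
    then show ?thesis by simp
  qed
  have sumW: "(\<Sum>\<rho>\<in>UNIV. (if \<rho> \<in> W then g \<rho> else 0)) = (\<Sum>\<rho>\<in>W. g \<rho>)" for g :: "'r \<Rightarrow> 'z::comm_monoid_add"
    using sum.inter_restrict[of UNIV g W] by simp
  have sumC: "(\<Sum>\<rho>\<in>UNIV. (if \<rho> \<in> C then g \<rho> else 0)) = (\<Sum>\<rho>\<in>C. g \<rho>)" for g :: "'r \<Rightarrow> 'z::comm_monoid_add"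
    using sum.inter_restrict[of UNIV g C] by simp
  have op: "one_param u b"
  proof -
    have pt: "real_of_int (b \<rho>) *\<^sub>R f \<rho> = real k *\<^sub>R (if \<rho> \<in> W then c \<rho> *\<^sub>R f \<rho> else 0) - real k *\<^sub>R (if \<rho> \<in> C then f \<rho> else 0)" for \<rho>
      unfolding beq by (cases "\<rho> \<in> C"; cases "\<rho> \<in> W") (simp_all add: c'_def algebra_simps)
    have "realv (\<Sum>\<rho>\<in>UNIV. b \<rho> *s u \<rho>) = (\<Sum>\<rho>\<in>UNIV. real_of_int (b \<rho>) *\<^sub>R f \<rho>)"
      by (simp add: realv_sum realv_smult f_def)
    also have "\<dots> = real k *\<^sub>R (\<Sum>\<rho>\<in>W. c \<rho> *\<^sub>R f \<rho>) - real k *\<^sub>R (\<Sum>\<rho>\<in>C. f \<rho>)"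
      unfolding pt by (simp add: sum_subtractf scaleR_sum_right[symmetric] sumW sumC)
    also have "\<dots> = 0" using veq' by (simp add: v_def)
    finally have "realv (\<Sum>\<rho>\<in>UNIV. b \<rho> *s u \<rho>) = realv 0" by simp
    then show ?thesis unfolding one_param_def by (rule realv_inj)
  qed
  have lim: "\<exists>l. ((\<lambda>t. ops_act b t x) \<longlongrightarrow> l) (at (0::complex))" if x0: "\<forall>\<rho>\<in>C. x \<rho> = 0" for x :: "'r \<Rightarrow> complex"
  proof -
    define g where "g = (\<lambda>t::complex. \<lambda>\<rho>. if \<rho> \<in> C then 0 else t ^ nat (b \<rho>) * x \<rho>)"
    have eqg: "ops_act b t x = g t" for t
    proof
      fix \<rho> show "ops_act b t x \<rho> = g t \<rho>"
      proof (cases "\<rho> \<in> C")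
        case True then show ?thesis using x0 by (simp add: ops_act_def g_def)
      next
        case False
        then have "b \<rho> = int (nat (b \<rho>))" using bnn by simp
        then have "t powi b \<rho> = t ^ nat (b \<rho>)" by (metis power_int_of_nat)
        then show ?thesis using False by (simp add: ops_act_def g_def)
      qed
    qed
    have "continuous_on UNIV (\<lambda>t. g t \<rho>)" for \<rho>
      unfolding g_def by (cases "\<rho> \<in> C") (simp_all add: continuous_intros)
    then have "continuous_on UNIV g"
      by (intro continuous_on_coordinatewise_then_product)
    then have "isCont g 0" by (simp add: continuous_on_eq_continuous_at)
    then have "(g \<longlongrightarrow> g 0) (at 0)" by (simp add: isCont_def)
    then have "((\<lambda>t. ops_act b t x) \<longlongrightarrow> g 0) (at 0)" by (simp add: eqg)
    then show ?thesis by blast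
  qed
  have cp: "char_pair a b < 0" if am: "ample u F a" for a
  proof -
    obtain m :: "int ^ 'n" where m1: "\<forall>\<rho>\<in>\<tau>. ipair m (u \<rho>) = - a \<rho>"
        and m2: "\<forall>\<rho>. \<rho> \<notin> \<tau> \<longrightarrow> ipair m (u \<rho>) > - a \<rho>"
      using am tauF tauint unfolding ample_def by blast
    have ip: "real_of_int (ipair m (u \<rho>)) = realv m \<bullet> f \<rho>" for \<rho>
      by (simp add: f_def inner_realv)
    have "(\<Sum>\<rho>\<in>W. real_of_int (a \<rho>) * c \<rho>) = - (\<Sum>\<rho>\<in>W. c \<rho> * (realv m \<bullet> f \<rho>))"
    proof -
      have "(\<Sum>\<rho>\<in>W. real_of_int (a \<rho>) * c \<rho>) = (\<Sum>\<rho>\<in>W. - (c \<rho> * (realv m \<bullet> f \<rho>)))"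
      proof (rule sum.cong[OF refl])
        fix \<rho> assume "\<rho> \<in> W"
        then have "a \<rho> = - ipair m (u \<rho>)" using m1 Wt by auto
        then show "real_of_int (a \<rho>) * c \<rho> = - (c \<rho> * (realv m \<bullet> f \<rho>))"
          using ip[of \<rho>] by simp
      qed
      then show ?thesis by (simp add: sum_negf)
    qed
    also have "(\<Sum>\<rho>\<in>W. c \<rho> * (realv m \<bullet> f \<rho>)) = realv m \<bullet> v"
      by (simp add: veq' inner_sum_right)
    also have "realv m \<bullet> v = (\<Sum>\<rho>\<in>C. real_of_int (ipair m (u \<rho>)))"
      by (simp add: v_def inner_sum_right ip)
    finally have sW: "(\<Sum>\<rho>\<in>W. real_of_int (a \<rho>) * c \<rho>) = - (\<Sum>\<rho>\<in>C. real_of_int (ipair m (u \<rho>)))" .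
    have "(\<Sum>\<rho>\<in>C. - ipair m (u \<rho>)) < (\<Sum>\<rho>\<in>C. a \<rho>)"
    proof (rule sum_strict_mono_ex1)
      show "finite C" by simp
      show "\<forall>x\<in>C. - ipair m (u x) \<le> a x"
      proof
        fix x assume "x \<in> C"
        show "- ipair m (u x) \<le> a x"
        proof (cases "x \<in> \<tau>")
          case True then show ?thesis using m1 by simp
        next
          case False then show ?thesis using m2 by force
        qed
      qed
      obtain r where "r \<in> C" "r \<notin> \<tau>" using Cnt by blast
      then show "\<exists>x\<in>C. - ipair m (u x) < a x" using m2 by force
    qed
    then have ineq: "- (\<Sum>\<rho>\<in>C. real_of_int (ipair m (u \<rho>))) < (\<Sum>\<rho>\<in>C. real_of_int (a \<rho>))"
      by (simp add: sum_negf flip: of_int_sum)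
    have "real_of_int (char_pair a b) = (\<Sum>\<rho>\<in>UNIV. real_of_int (a \<rho>) * real_of_int (b \<rho>))"
      by (simp add: char_pair_def)
    also have "\<dots> = (\<Sum>\<rho>\<in>UNIV. real k * (if \<rho> \<in> W then real_of_int (a \<rho>) * c \<rho> else 0) - real k * (if \<rho> \<in> C then real_of_int (a \<rho>) else 0))"
      unfolding beq by (rule sum.cong[OF refl]) (simp add: c'_def algebra_simps)
    also have "\<dots> = real k * ((\<Sum>\<rho>\<in>W. real_of_int (a \<rho>) * c \<rho>) - (\<Sum>\<rho>\<in>C. real_of_int (a \<rho>)))"
      by (simp add: sum_subtractf sum_distrib_left[symmetric] sumW sumC right_diff_distrib)
    also have "\<dots> < 0"
      using sW ineq k(1) by (simp add: mult_pos_neg)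
    finally show ?thesis by simp
  qed
  show ?thesis
    apply (rule exI[of _ b], rule exI[of _ k])
    using k(1) beq op lim cp by (simp add: c'_def)
qed



theorem theoremB:
  fixes u :: "'r::finite \<Rightarrow> int ^ 'n" and F :: "'r set set" and C :: "'r set"
  assumes "projective_fan u F"
    and "primitive_collection F C"
  shows "\<exists>b. one_param u b \<and>
     (\<forall>x :: 'r \<Rightarrow> complex. (\<forall>\<rho>\<in>C. x \<rho> = 0) \<longrightarrow>
         (\<exists>l. ((\<lambda>t. ops_act b t x) \<longlongrightarrow> l) (at (0::complex)))) \<and>
     (\<forall>a. ample u F a \<longrightarrow> char_pair a b < 0) \<and>
     (simplicial_fan u F \<longrightarrow>
        (\<exists>k::nat. k > 0 \<and> (\<forall>\<rho>. - real_of_int (b \<rho>) = real k * prim_relation u F C \<rho>)))"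
proof -
  have fan: "is_fan u F" and cover: "(\<Union>S\<in>F. cone_gen u S) = UNIV"
    using assms(1) unfolding projective_fan_def complete_fan_def by auto
  have CnS: "\<forall>S\<in>F. \<not> C \<subseteq> S" using assms(2) unfolding primitive_collection_def by blast
  note fanD = fan[unfolded is_fan_def]
  have faces: "\<forall>S\<in>F. \<forall>K. K face_of cone_gen u S \<and> K \<noteq> {} \<longrightarrow> (\<exists>T\<in>F. T \<subseteq> S \<and> K = cone_gen u T)"
    using fanD[THEN conjunct2, THEN conjunct2, THEN conjunct2, THEN conjunct2, THEN conjunct1] .
  have mono: "\<forall>S\<in>F. \<forall>T\<in>F. cone_gen u T \<subseteq> cone_gen u S \<longrightarrow> T \<subseteq> S"
    using fanD[THEN conjunct2, THEN conjunct2, THEN conjunct2, THEN conjunct1] .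
  have inter: "\<forall>S\<in>F. \<forall>T\<in>F. (cone_gen u S \<inter> cone_gen u T) face_of cone_gen u S"
    using fanD[THEN conjunct2, THEN conjunct2, THEN conjunct2, THEN conjunct2, THEN conjunct2] by blast
  define f where "f = (\<lambda>\<rho>. realv (u \<rho>))"
  define v where "v = (\<Sum>\<rho>\<in>C. f \<rho>)"
  obtain \<tau> where tauF: "\<tau> \<in> F" and tauint: "interior (cone_gen u \<tau>) \<noteq> {}" and vtau: "v \<in> cone_gen u \<tau>"
    using complete_full_cover[OF cover, of v] by blast
  obtain L where L: "L face_of cone_gen u \<tau>" "v \<in> rel_interior L"
    using face_rel_int[OF convex_cone_gen closed_cone_gen vtau] by blast
  have "L \<noteq> {}" using L(2) rel_interior_subset by blast
  have fa: "\<forall>K. K face_of cone_gen u \<tau> \<and> K \<noteq> {} \<longrightarrow> (\<exists>T\<in>F. T \<subseteq> \<tau> \<and> K = cone_gen u T)"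
    using faces tauF by (rule bspec)
  have "\<exists>T\<in>F. T \<subseteq> \<tau> \<and> L = cone_gen u T" using fa L(1) \<open>L \<noteq> {}\<close> by blast
  then obtain \<sigma> where sigF: "\<sigma> \<in> F" and sigtau: "\<sigma> \<subseteq> \<tau>" and Lsig: "L = cone_gen u \<sigma>"
    by blast
  have vsig: "v \<in> rel_interior (cone_gen u \<sigma>)" using L(2) Lsig by simp
  have sub: "S1 \<subseteq> S2" if "S1 \<in> F" "S2 \<in> F" "v \<in> rel_interior (cone_gen u S1)" "v \<in> rel_interior (cone_gen u S2)" for S1 S2
  proof -
    have fc: "(cone_gen u S1 \<inter> cone_gen u S2) face_of cone_gen u S1" using inter that(1,2) by blast
    have "v \<in> cone_gen u S1 \<inter> cone_gen u S2" using that(3,4) rel_interior_subset by blast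
    then have "cone_gen u S1 \<subseteq> cone_gen u S1 \<inter> cone_gen u S2"
      using subset_of_face_of[OF fc order.refl] that(3) by blast
    then have "cone_gen u S1 \<subseteq> cone_gen u S2" by blast
    then show ?thesis using mono that(1,2) by blast
  qed
  have psig: "prim_sigma u F C = \<sigma>"
    unfolding prim_sigma_def
  proof (rule the_equality)
    show "\<sigma> \<in> F \<and> (\<Sum>\<rho>\<in>C. realv (u \<rho>)) \<in> rel_interior (cone_gen u \<sigma>)"
      using sigF vsig by (simp add: v_def f_def)
    fix S assume "S \<in> F \<and> (\<Sum>\<rho>\<in>C. realv (u \<rho>)) \<in> rel_interior (cone_gen u S)"
    then have "S \<in> F" "v \<in> rel_interior (cone_gen u S)" by (simp_all add: v_def f_def)
    then show "S = \<sigma>" using sub sigF vsig by (meson subset_antisym)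
  qed
  have CnT: "\<not> C \<subseteq> \<tau>" using CnS tauF by blast
  show ?thesis
  proof (cases "simplicial_fan u F")
    case True
    have inj: "inj_on f \<sigma>" and ind: "independent (f ` \<sigma>)"
      using True sigF unfolding simplicial_fan_def f_def by blast+
    have "v \<in> cone_gen u \<sigma>" using vsig rel_interior_subset by blast
    then obtain c where cpos: "\<forall>\<rho>\<in>\<sigma>. c \<rho> \<ge> 0" and ceq: "v = (\<Sum>\<rho>\<in>\<sigma>. c \<rho> *\<^sub>R f \<rho>)"
      unfolding cone_gen_def f_def by blast
    obtain b k where bk: "k > (0::nat)"
      "\<forall>\<rho>. real_of_int (b \<rho>) = - real k * ((if \<rho> \<in> C then 1 else 0) - (if \<rho> \<in> \<sigma> then c \<rho> else 0))"
      "one_param u b"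
      "\<forall>x :: 'r \<Rightarrow> complex. (\<forall>\<rho>\<in>C. x \<rho> = 0) \<longrightarrow> (\<exists>l. ((\<lambda>t. ops_act b t x) \<longlongrightarrow> l) (at (0::complex)))"
      "\<forall>a. ample u F a \<longrightarrow> char_pair a b < 0"
    proof -
      have "\<exists>b k. k > (0::nat) \<and>
        (\<forall>\<rho>. real_of_int (b \<rho>) = - real k * ((if \<rho> \<in> C then 1 else 0) - (if \<rho> \<in> \<sigma> then c \<rho> else 0))) \<and>
        one_param u b \<and>
        (\<forall>x :: 'r \<Rightarrow> complex. (\<forall>\<rho>\<in>C. x \<rho> = 0) \<longrightarrow> (\<exists>l. ((\<lambda>t. ops_act b t x) \<longlongrightarrow> l) (at (0::complex)))) \<and>
        (\<forall>a. ample u F a \<longrightarrow> char_pair a b < 0)"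
        by (rule core[OF tauF tauint sigtau CnT inj[unfolded f_def] ind[unfolded f_def] cpos ceq[unfolded v_def f_def]])
      then show ?thesis using that by blast
    qed
    have pq: "prim_q u F C = (\<lambda>\<rho>. if \<rho> \<in> \<sigma> then c \<rho> else 0)"
      unfolding prim_q_def psig
    proof (rule the_equality)
      show "(\<forall>\<rho>. \<rho> \<notin> \<sigma> \<longrightarrow> (if \<rho> \<in> \<sigma> then c \<rho> else 0) = 0) \<and>
          (\<forall>\<rho>\<in>\<sigma>. 0 \<le> (if \<rho> \<in> \<sigma> then c \<rho> else 0)) \<and>
          (\<Sum>\<rho>\<in>C. realv (u \<rho>)) = (\<Sum>\<rho>\<in>\<sigma>. (if \<rho> \<in> \<sigma> then c \<rho> else 0) *\<^sub>R realv (u \<rho>))"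
        using cpos ceq by (simp add: v_def f_def)
      fix q assume q: "(\<forall>\<rho>. \<rho> \<notin> \<sigma> \<longrightarrow> q \<rho> = 0) \<and> (\<forall>\<rho>\<in>\<sigma>. 0 \<le> q \<rho>) \<and>
          (\<Sum>\<rho>\<in>C. realv (u \<rho>)) = (\<Sum>\<rho>\<in>\<sigma>. q \<rho> *\<^sub>R realv (u \<rho>))"
      then have "v = (\<Sum>\<rho>\<in>\<sigma>. q \<rho> *\<^sub>R f \<rho>)" by (simp add: v_def f_def)
      then have "(\<Sum>\<rho>\<in>\<sigma>. (q \<rho> - c \<rho>) *\<^sub>R f \<rho>) = 0"
        using ceq by (simp add: scaleR_diff_left sum_subtractf)
      then have "\<forall>\<rho>\<in>\<sigma>. q \<rho> - c \<rho> = 0" by (rule indep_coeffs_zero[OF finite inj ind])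
      then show "q = (\<lambda>\<rho>. if \<rho> \<in> \<sigma> then c \<rho> else 0)" using q by auto
    qed
    have "\<forall>\<rho>. - real_of_int (b \<rho>) = real k * prim_relation u F C \<rho>"
      using bk(2) by (simp add: prim_relation_def pq)
    then show ?thesis using bk by blast
  next
    case False
    obtain c where cpos: "\<forall>\<rho>\<in>\<tau>. c \<rho> \<ge> 0" and ceq: "v = (\<Sum>\<rho>\<in>\<tau>. c \<rho> *\<^sub>R f \<rho>)"
      using vtau unfolding cone_gen_def f_def by blast
    obtain W d where W: "W \<subseteq> \<tau>" "inj_on f W" "independent (f ` W)" "\<forall>\<rho>\<in>W. d \<rho> \<ge> 0"
        "v = (\<Sum>\<rho>\<in>W. d \<rho> *\<^sub>R f \<rho>)"
      using conic_cara[OF finite cpos ceq] by blast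
    obtain b k where bk: "k > (0::nat)"
      "one_param u b"
      "\<forall>x :: 'r \<Rightarrow> complex. (\<forall>\<rho>\<in>C. x \<rho> = 0) \<longrightarrow> (\<exists>l. ((\<lambda>t. ops_act b t x) \<longlongrightarrow> l) (at (0::complex)))"
      "\<forall>a. ample u F a \<longrightarrow> char_pair a b < 0"
    proof -
      have "\<exists>b k. k > (0::nat) \<and>
        (\<forall>\<rho>. real_of_int (b \<rho>) = - real k * ((if \<rho> \<in> C then 1 else 0) - (if \<rho> \<in> W then d \<rho> else 0))) \<and>
        one_param u b \<and>
        (\<forall>x :: 'r \<Rightarrow> complex. (\<forall>\<rho>\<in>C. x \<rho> = 0) \<longrightarrow> (\<exists>l. ((\<lambda>t. ops_act b t x) \<longlongrightarrow> l) (at (0::complex)))) \<and>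
        (\<forall>a. ample u F a \<longrightarrow> char_pair a b < 0)"
        by (rule core[OF tauF tauint W(1) CnT W(2)[unfolded f_def] W(3)[unfolded f_def] W(4) W(5)[unfolded v_def f_def]])
      then show ?thesis using that by blast
    qed
    then show ?thesis using False by blast
  qed
qed


end
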